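(* Let $q$ be a root of unity with $q^4\ne1$, $\sigma$ general and $w\in\mathbb C$. Then the image of the map $(\Pi_s,\Pi_t):E^0_{\sigma,w}\to\mathbb C^2$ is exactly the curve $\{(x,y)\in\mathbb C^2: xy=R(z_0,w)\}$, where $$R(z_0,w)=\begin{cases}\dfrac{T_N(w)+z_0^2-2}{z_0^2-4},&n\text{ odd},\\[2mm] \left(\dfrac{T_N(w)+\epsilon^2z_0}{z_0-2}\right)^2,&n\text{ even}.\end{cases}$$
   Context: $q$ is a root of unity, $n=\mathrm{ord}(q^2)$, $N=\mathrm{ord}(q^4)$, $\epsilon=q^{N^2}$, $D=n$, and $T_k$ is the Chebyshev polynomial with $T_k(t+t^{-1})=t^k+t^{-k}$. For $\sigma\in\mathbb C^\times$ set $z_0=\sigma^D+\sigma^{-D}$, $\hat\lambda_i=q^{2i}\sigma-q^{-2i}\sigma^{-1}$ ($i\in\mathbb Z/D$). $\sigma$ is general if $z_0\neq\pm2$, or $z_0=-2$ and $n$ is even (equivalently all $\hat\lambda_i\ne0$). For general $\sigma$ and $w\in\mathbb C$: $r_i(\sigma,w)=\dfrac{w+q^{4i+2}\sigma^2+q^{-4i-2}\sigma^{-2}}{\hat\lambda_i\hat\lambda_{i+1}}$, $E^0_{\sigma,w}=\{(s_1,\dots,s_D,t_1,\dots,t_D)\in\mathbb C^{2D}:s_it_i=r_i(\sigma,w)\ \forall i\}$, $\Pi_s=\prod_{i=1}^Ds_i$, $\Pi_t=\prod_{i=1}^Dt_i$. *)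

theory Defs
  imports Complex_Main
begin

definition root_of_unity :: "complex \<Rightarrow> bool" where
  "root_of_unity q \<longleftrightarrow> (\<exists>k::nat. k > 0 \<and> q ^ k = 1)"

definition cord :: "complex \<Rightarrow> nat" where
  "cord z = (LEAST k::nat. k > 0 \<and> z ^ k = 1)"

definition n_of :: "complex \<Rightarrow> nat" where "n_of q = cord (q ^ 2)"
definition N_of :: "complex \<Rightarrow> nat" where "N_of q = cord (q ^ 4)"
definition eps_of :: "complex \<Rightarrow> complex" where "eps_of q = q ^ ((N_of q)\<^sup>2)"

text \<open>Chebyshev polynomial: T_k(t + t^-1) = t^k + t^-k (well defined; t and 1/t give the same value).\<close>
definition cheb :: "nat \<Rightarrow> complex \<Rightarrow> complex" where
  "cheb k w = (let t = (SOME t::complex. t \<noteq> 0 \<and> t + inverse t = w) in t ^ k + inverse t ^ k)"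

definition z0 :: "complex \<Rightarrow> complex \<Rightarrow> complex" where
  "z0 q \<sigma> = \<sigma> ^ n_of q + inverse \<sigma> ^ n_of q"

definition lam_hat :: "complex \<Rightarrow> complex \<Rightarrow> nat \<Rightarrow> complex" where
  "lam_hat q \<sigma> i = q ^ (2*i) * \<sigma> - inverse (q ^ (2*i)) * inverse \<sigma>"

definition general :: "complex \<Rightarrow> complex \<Rightarrow> bool" where
  "general q \<sigma> \<longleftrightarrow> (z0 q \<sigma> \<noteq> 2 \<and> z0 q \<sigma> \<noteq> -2) \<or> (z0 q \<sigma> = -2 \<and> even (n_of q))"

definition r_coef :: "complex \<Rightarrow> complex \<Rightarrow> complex \<Rightarrow> nat \<Rightarrow> complex" where
  "r_coef q \<sigma> w i = (w + q ^ (4*i+2) * \<sigma>\<^sup>2 + inverse (q ^ (4*i+2)) * inverse (\<sigma>\<^sup>2))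
      / (lam_hat q \<sigma> i * lam_hat q \<sigma> (i+1))"

text \<open>E^0_{sigma,w}: points (s_1..s_D, t_1..t_D), encoded as pairs of functions restricted to {1..D}.\<close>
definition E0 :: "complex \<Rightarrow> complex \<Rightarrow> complex \<Rightarrow> ((nat \<Rightarrow> complex) \<times> (nat \<Rightarrow> complex)) set" where
  "E0 q \<sigma> w = {(s, t). (\<forall>i\<in>{1..n_of q}. s i * t i = r_coef q \<sigma> w i)
                  \<and> (\<forall>i. i \<notin> {1..n_of q} \<longrightarrow> s i = 0 \<and> t i = 0)}"

definition R_fun :: "complex \<Rightarrow> complex \<Rightarrow> complex \<Rightarrow> complex" where
  "R_fun q z w = (if odd (n_of q) then (cheb (N_of q) w + z\<^sup>2 - 2) / (z\<^sup>2 - 4)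
                  else ((cheb (N_of q) w + (eps_of q)\<^sup>2 * z) / (z - 2))\<^sup>2)"

end

theory Submission
  imports Defs "HOL-Computational_Algebra.Polynomial"
begin

lemma roots_inj:
  fixes \<zeta> :: complex
  assumes "\<zeta>^m = 1" "\<forall>k. 0<k \<and> k<m \<longrightarrow> \<zeta>^k \<noteq> 1" "m > 0"
  shows "inj_on (\<lambda>i. \<zeta>^i) {a..<a+m}"
proof -
  have z0: "\<zeta> \<noteq> 0" using assms(1,3) by (cases m) auto
  have *: "i = j" if "i \<in> {a..<a+m}" "j \<in> {a..<a+m}" "\<zeta>^i = \<zeta>^j" "i \<le> j" for i j
  proof (rule ccontr)
    assume "i \<noteq> j"
    hence "0 < j - i" "j - i < m" using that by auto
    moreover have "\<zeta>^j = \<zeta>^i * \<zeta>^(j-i)" using that(4) by (simp add: power_add[symmetric])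
    hence "\<zeta>^(j-i) = 1" using that(3) z0 by simp
    ultimately show False using assms(2) by blast
  qed
  show ?thesis unfolding inj_on_def
  proof (intro ballI impI)
    fix i j assume "i \<in> {a..<a+m}" "j \<in> {a..<a+m}" "\<zeta>^i = \<zeta>^j"
    then show "i = j" using *[of i j] *[of j i] by (cases "i \<le> j") auto
  qed
qed

lemma prod_roots1:
  fixes \<zeta> z :: complex
  assumes "\<zeta>^m = 1" "\<forall>k. 0<k \<and> k<m \<longrightarrow> \<zeta>^k \<noteq> 1" "m > 0"
  shows "(\<Prod>i\<in>{a..<a+m}. z - \<zeta>^i) = z^m - 1"
proof -
  define pp where "pp = (\<Prod>i\<in>{a..<a+m}. [:-(\<zeta>^i), 1:])"
  define qq where "qq = (monom 1 m - 1 :: complex poly)"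
  have dpp: "degree pp = m" unfolding pp_def
    by (subst degree_prod_eq_sum_degree) auto
  have lpp: "lead_coeff pp = 1" unfolding pp_def by (simp add: lead_coeff_prod)
  have dqq: "degree qq \<le> m" unfolding qq_def
    by (rule order.trans[OF degree_diff_le_max]) (simp add: degree_monom_le)
  have cqq: "coeff qq m = 1" unfolding qq_def using assms(3) by (simp add: coeff_monom)
  have "pp = qq"
  proof (rule poly_eqI_degree_lead_coeff[where n=m and A="(\<lambda>i. \<zeta>^i) ` {a..<a+m}"])
    show "coeff pp m = coeff qq m" using dpp lpp cqq by simp
    show "m \<le> card ((\<lambda>i. \<zeta>^i) ` {a..<a+m})"
      using card_image[OF roots_inj[OF assms(1,2,3)]] by simp
    show "degree pp \<le> m" using dpp by simp
    show "degree qq \<le> m" by fact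
    fix z assume "z \<in> (\<lambda>i. \<zeta>^i) ` {a..<a+m}"
    then obtain j where j: "j \<in> {a..<a+m}" "z = \<zeta>^j" by auto
    have "poly pp z = (\<Prod>i\<in>{a..<a+m}. z - \<zeta>^i)" unfolding pp_def by (simp add: poly_prod)
    also have "\<dots> = 0" using j by (intro prod_zero) auto
    also have "(\<zeta>^j)^m = (\<zeta>^m)^j" by (metis power_mult mult.commute)
    hence "0 = poly qq z" unfolding qq_def using j assms(1)
      by (simp add: poly_monom)
    finally show "poly pp z = poly qq z" .
  qed
  hence "poly pp z = poly qq z" by simp
  thus ?thesis unfolding pp_def qq_def by (simp add: poly_prod poly_monom)
qed

lemma prod_roots:
  fixes \<zeta> x y :: complex
  assumes "\<zeta>^m = 1" "\<forall>k. 0<k \<and> k<m \<longrightarrow> \<zeta>^k \<noteq> 1" "m > 0"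
  shows "(\<Prod>i\<in>{a..<a+m}. x - \<zeta>^i * y) = x^m - y^m"
proof (cases "y = 0")
  case True thus ?thesis using assms(3) by simp
next
  case False
  have "(\<Prod>i\<in>{a..<a+m}. x - \<zeta>^i * y) = (\<Prod>i\<in>{a..<a+m}. y * (x/y - \<zeta>^i))"
    using False by (intro prod.cong) (auto simp: field_simps)
  also have "\<dots> = y^m * (\<Prod>i\<in>{a..<a+m}. (x/y - \<zeta>^i))" by (simp add: prod.distrib)
  also have "\<dots> = y^m * ((x/y)^m - 1)" by (simp add: prod_roots1[OF assms])
  also have "\<dots> = x^m - y^m" using False by (simp add: field_simps power_divide)
  finally show ?thesis .
qed

lemma prod_roots_k:
  fixes \<zeta> x y :: complex
  assumes "\<zeta>^m = 1" "\<forall>k. 0<k \<and> k<m \<longrightarrow> \<zeta>^k \<noteq> 1" "m > 0"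
  shows "(\<Prod>i\<in>{a..<a+m*k}. x - \<zeta>^i * y) = (x^m - y^m)^k"
proof (induction k)
  case 0 then show ?case by simp
next
  case (Suc k)
  have e: "a+m*Suc k = a+m*k+m" by simp
  have "(\<Prod>i\<in>{a..<a+m*Suc k}. x - \<zeta>^i * y) =
     (\<Prod>i\<in>{a..<a+m*k}. x - \<zeta>^i * y) * (\<Prod>i\<in>{(a+m*k)..<(a+m*k)+m}. x - \<zeta>^i * y)"
    unfolding e by (rule prod.atLeastLessThan_concat[symmetric]) auto
  also have "\<dots> = (x^m - y^m)^Suc k" using Suc prod_roots[OF assms] by simp
  finally show ?case .
qed

lemma r_form:
  fixes q \<sigma> t :: complex
  assumes "q \<noteq> 0" "\<sigma> \<noteq> 0" "t \<noteq> 0"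
  shows "r_coef q \<sigma> (t + inverse t) i =
    (t - (q^4)^i * (-(q^2*\<sigma>^2))) * (1 - (q^4)^i * (-(q^2*t*\<sigma>^2))) /
    (t * ((1 - (q^4)^i * \<sigma>^2) * (1 - (q^4)^i * (q^4*\<sigma>^2))))"
proof -
  define Q where "Q = q^(2*i)"
  have Q0: "Q \<noteq> 0" using assms by (simp add: Q_def)
  have e1: "q^(4*i+2) = Q^2*q^2"
  proof -
    have "q^(4*i+2) = q^(2*i*2+2)" by (rule arg_cong[of _ _ "power q"]) simp
    also have "\<dots> = Q^2*q^2" unfolding Q_def by (simp only: power_add power_mult)
    finally show ?thesis .
  qed
  have e2: "q^(2*(i+1)) = Q*q^2" unfolding Q_def by (simp add: power_add power2_eq_square)
  have e3: "(q^4)^i = Q^2"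
  proof -
    have "(q^4)^i = q^(2*i*2)" by (simp only: power_mult[symmetric]) (rule arg_cong[of _ _ "power q"], simp)
    also have "\<dots> = Q^2" unfolding Q_def by (simp only: power_mult)
    finally show ?thesis .
  qed
  define K where "K = inverse (t * (Q^2*q^2*\<sigma>^2))"
  have K0: "K \<noteq> 0" using assms Q0 by (simp add: K_def)
  have num: "t + inverse t + Q^2*q^2 * \<sigma>^2 + inverse (Q^2*q^2) * inverse (\<sigma>^2)
      = K * ((t - Q^2 * (-(q^2*\<sigma>^2))) * (1 - Q^2 * (-(q^2*t*\<sigma>^2))))"
    unfolding K_def using assms Q0 by (simp add: field_simps) 
  have den: "(Q*\<sigma> - inverse Q * inverse \<sigma>) * (Q*q^2*\<sigma> - inverse (Q*q^2) * inverse \<sigma>)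
      = K * (t * ((1 - Q^2 * \<sigma>^2) * (1 - Q^2 * (q^4*\<sigma>^2))))"
    unfolding K_def using assms Q0 by (simp add: field_simps) (simp add: eval_nat_numeral algebra_simps)
  show ?thesis
    unfolding r_coef_def lam_hat_def e1 e3 e2 Q_def[symmetric]
    by (subst num, subst den, simp only: mult_divide_mult_cancel_left[OF K0])
qed

lemma image_char:
  fixes r :: "nat \<Rightarrow> complex"
  assumes n: "n > 0"
  shows "(\<lambda>(s, t). (\<Prod>i\<in>{1..n}. s i, \<Prod>i\<in>{1..n}. t i)) `
     {(s, t). (\<forall>i\<in>{1..n}. s i * t i = r i) \<and> (\<forall>i. i \<notin> {1..n} \<longrightarrow> s i = 0 \<and> t i = 0)}
   = {(x, y). x * y = (\<Prod>i\<in>{1..n}. r i)}" (is "?f ` ?E = ?C")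
proof
  show "?f ` ?E \<subseteq> ?C"
  proof
    fix z assume "z \<in> ?f ` ?E"
    then obtain e where e: "e \<in> ?E" "z = ?f e" by (rule imageE)
    obtain s t where est: "e = (s, t)" by (cases e)
    have h: "\<forall>i\<in>{1..n}. s i * t i = r i" using e(1) est by simp
    have "(\<Prod>i\<in>{1..n}. s i) * (\<Prod>i\<in>{1..n}. t i) = (\<Prod>i\<in>{1..n}. s i * t i)"
      by (simp add: prod.distrib)
    also have "\<dots> = (\<Prod>i\<in>{1..n}. r i)" using h by (intro prod.cong) auto
    finally show "z \<in> ?C" using e(2) est by simp
  qed
next
  have build: "(x, y) \<in> ?f ` ?E" if j: "j \<in> {1..n}" and sv: "\<And>i. sv i * tv i = r i"
     and xs: "(\<Prod>i\<in>{1..n}. sv i) = x" and yt: "(\<Prod>i\<in>{1..n}. tv i) = y" for x y j sv tv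
  proof -
    let ?s = "\<lambda>i. if i \<in> {1..n} then sv i else 0"
    let ?t = "\<lambda>i. if i \<in> {1..n} then tv i else 0"
    have m1: "\<forall>i\<in>{1..n}. ?s i * ?t i = r i" using sv by simp
    have m2: "\<forall>i. i \<notin> {1..n} \<longrightarrow> ?s i = 0 \<and> ?t i = 0" by simp
    have mem: "(?s, ?t) \<in> ?E" using m1 m2 by (simp only: mem_Collect_eq case_prod_conv)
    have p1: "(\<Prod>i\<in>{1..n}. ?s i) = x" unfolding xs[symmetric] by (rule prod.cong) simp_all
    have p2: "(\<Prod>i\<in>{1..n}. ?t i) = y" unfolding yt[symmetric] by (rule prod.cong) simp_all
    have "(x, y) = ?f (?s, ?t)" using p1 p2 by (simp only: case_prod_conv)
    thus ?thesis using mem by (rule image_eqI)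
  qed
  show "?C \<subseteq> ?f ` ?E"
  proof clarify
    fix x y assume xy: "x * y = (\<Prod>i\<in>{1..n}. r i)"
    have j1: "1 \<in> {1..n}" using n by auto
    show "(x, y) \<in> ?f ` ?E"
    proof (cases "(\<Prod>i\<in>{1..n}. r i) = 0")
      case False
      hence x0: "x \<noteq> 0" using xy by auto
      show ?thesis
      proof (rule build[OF j1])
        show "(if i = 1 then x else 1) * (r i * (if i = 1 then inverse x else 1)) = r i" for i
          using x0 by auto
        show "(\<Prod>i\<in>{1..n}. if i = 1 then x else 1) = x" using j1 by (simp add: prod.delta)
        have "(\<Prod>i\<in>{1..n}. r i * (if i = 1 then inverse x else 1)) = (\<Prod>i\<in>{1..n}. r i) * inverse x"
          using j1 by (simp add: prod.distrib prod.delta)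
        also have "\<dots> = y" using xy x0 by (simp add: field_simps)
        finally show "(\<Prod>i\<in>{1..n}. r i * (if i = 1 then inverse x else 1)) = y" .
      qed
    next
      case True
      note P0 = this
      then obtain j where j: "j \<in> {1..n}" "r j = 0" by auto
      from P0 xy have "x * y = 0" by simp
      hence "x = 0 \<or> y = 0" by simp
      then show ?thesis
      proof
        assume x0: "x = 0"
        show ?thesis
        proof (rule build[OF j(1)])
          show "(if i = j then 0 else r i) * (if i = j then y else 1) = r i" for i using j by auto
          show "(\<Prod>i\<in>{1..n}. if i = j then 0 else r i) = x" unfolding x0
            by (rule prod_zero) (use j in auto)
          show "(\<Prod>i\<in>{1..n}. if i = j then y else 1) = y" using j by (simp add: prod.delta)
        qed
      next
        assume y0: "y = 0"
        show ?thesis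
        proof (rule build[OF j(1)])
          show "(if i = j then x else 1) * (if i = j then 0 else r i) = r i" for i using j by auto
          show "(\<Prod>i\<in>{1..n}. if i = j then 0 else r i) = y" unfolding y0
            by (rule prod_zero) (use j in auto)
          show "(\<Prod>i\<in>{1..n}. if i = j then x else 1) = x" using j by (simp add: prod.delta)
        qed
      qed
    qed
  qed
qed

lemma cord_props:
  assumes "root_of_unity z"
  shows "cord z > 0" "z ^ cord z = 1" "\<And>k. 0 < k \<Longrightarrow> k < cord z \<Longrightarrow> z ^ k \<noteq> 1"
proof -
  obtain k where k: "k > 0 \<and> z ^ k = 1" using assms unfolding root_of_unity_def by auto
  have "cord z > 0 \<and> z ^ cord z = 1" unfolding cord_def by (rule LeastI[of _ k], fact k)
  thus "cord z > 0" "z ^ cord z = 1" by auto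
  show "z ^ k' \<noteq> 1" if "0 < k'" "k' < cord z" for k'
    using not_less_Least[of k' "\<lambda>k. k > 0 \<and> z ^ k = 1"] that unfolding cord_def by auto
qed

lemma cord_dvd:
  assumes "root_of_unity z" "z ^ k = 1"
  shows "cord z dvd k"
proof -
  let ?c = "cord z"
  have "z ^ k = z ^ (?c * (k div ?c) + k mod ?c)" by simp
  also have "\<dots> = (z ^ ?c) ^ (k div ?c) * z ^ (k mod ?c)" by (simp only: power_add power_mult)
  finally have "z ^ k = (z ^ ?c) ^ (k div ?c) * z ^ (k mod ?c)" .
  hence "z ^ (k mod ?c) = 1" using assms cord_props(2)[OF assms(1)] by simp
  moreover have "k mod ?c < ?c" using cord_props(1)[OF assms(1)] by simp
  ultimately have "k mod ?c = 0" using cord_props(3)[OF assms(1)] by blast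
  thus ?thesis by auto
qed

lemma root_pow: "root_of_unity q \<Longrightarrow> root_of_unity (q ^ j)"
  unfolding root_of_unity_def
proof -
  assume "\<exists>k. 0 < k \<and> q ^ k = 1"
  then obtain k where k: "0 < k" "q ^ k = 1" by auto
  have "(q ^ j) ^ k = (q ^ k) ^ j" by (simp only: power_mult[symmetric] mult.commute)
  thus "\<exists>k. 0 < k \<and> (q ^ j) ^ k = 1" using k by auto
qed

lemma cheb_root_ex: "\<exists>t::complex. t \<noteq> 0 \<and> t + inverse t = w"
proof -
  define s where "s = csqrt (w^2 - 4)"
  have s2: "s^2 = w^2 - 4" unfolding s_def by simp
  define t where "t = (w + s) / 2"
  have t0: "t \<noteq> 0"
  proof
    assume "t = 0"
    hence "w + s = 0" unfolding t_def by simp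
    hence "s = - w" by (simp add: add_eq_0_iff)
    hence "s^2 = w^2" by simp
    with s2 show False by simp
  qed
  have "t * t + 1 - w * t = (s^2 - (w^2 - 4)) / 4" unfolding t_def
    by (simp add: field_simps power2_eq_square)
  hence "t * t + 1 = w * t" using s2 by simp
  hence "t + inverse t = w" using t0 by (simp add: field_simps)
  thus ?thesis using t0 by blast
qed

lemma ddiv: fixes A B x \<tau> :: complex assumes "x \<noteq> 0" "\<tau> \<noteq> 0"
  shows "(A / (\<tau> * x)) / (B / x) = A / (\<tau> * B)"
  using assms by (cases "B = 0") (simp_all add: field_simps)

lemma odd_identity:
  fixes \<tau> S :: complex
  assumes "\<tau> \<noteq> 0" "S \<noteq> 0"
  shows "(\<tau> + S^2) * (1 + \<tau> * S^2) / (\<tau> * ((1 - S^2) * (1 - S^2)))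
       = (\<tau> + inverse \<tau> + (S + inverse S)^2 - 2) / ((S + inverse S)^2 - 4)"
proof -
  have S2: "S^2 \<noteq> 0" using assms by simp
  have a: "(S + inverse S)^2 - 4 = ((1 - S^2) * (1 - S^2)) / S^2" using assms by (simp add: field_simps power2_eq_square)
  have b: "\<tau> + inverse \<tau> + (S + inverse S)^2 - 2 = (\<tau> + S^2) * (1 + \<tau> * S^2) / (\<tau> * S^2)"
    using assms by (simp add: field_simps power2_eq_square)
  show ?thesis unfolding a b ddiv[OF S2 assms(1)] ..
qed

lemma even_identity:
  fixes \<tau> S e :: complex
  assumes "\<tau> \<noteq> 0" "S \<noteq> 0" "e = 1 \<or> e = -1"
  shows "(\<tau> - (- e * S))^2 * (1 - (- e * \<tau> * S))^2 / (\<tau>^2 * ((1 - S)^2 * (1 - S)^2))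
       = ((\<tau> + inverse \<tau> + e * (S + inverse S)) / (S + inverse S - 2))^2"
proof -
  have a: "S + inverse S - 2 = (1 - S)^2 / S" using assms by (simp add: field_simps power2_eq_square)
  have b: "\<tau> + inverse \<tau> + e * (S + inverse S) = (e * ((\<tau> + e * S) * (1 + e * \<tau> * S))) / (\<tau> * S)"
    using assms by (auto simp: field_simps power2_eq_square)
  have "((\<tau> + inverse \<tau> + e * (S + inverse S)) / (S + inverse S - 2))^2
     = ((e * ((\<tau> + e * S) * (1 + e * \<tau> * S))) / (\<tau> * (1 - S)^2))^2"
    unfolding a b ddiv[OF assms(2,1)] ..
  also have "\<dots> = (e * ((\<tau> + e * S) * (1 + e * \<tau> * S)))^2 / (\<tau> * (1 - S)^2)^2"
    by (simp only: power_divide)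
  also have "(e * ((\<tau> + e * S) * (1 + e * \<tau> * S)))^2 = e^2 * ((\<tau> + e * S)^2 * (1 + e * \<tau> * S)^2)"
    by algebra
  also have "(\<tau> * (1 - S)^2)^2 = \<tau>^2 * ((1 - S)^2 * (1 - S)^2)" by algebra
  also have "e^2 = 1" using assms by auto
  finally show ?thesis by simp
qed

theorem mainTheorem6:
  fixes q \<sigma> w :: complex
  assumes "root_of_unity q" and "q ^ 4 \<noteq> 1"
    and "\<sigma> \<noteq> 0" and "general q \<sigma>"
  shows "(\<lambda>(s, t). (\<Prod>i\<in>{1..n_of q}. s i, \<Prod>i\<in>{1..n_of q}. t i)) ` E0 q \<sigma> w
         = {(x, y). x * y = R_fun q (z0 q \<sigma>) w}"
proof -
  obtain k0 where k0: "k0 > 0" "q ^ k0 = 1" using assms(1) unfolding root_of_unity_def by auto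
  have q0: "q \<noteq> 0" using k0 by (cases k0) auto
  define n where "n = n_of q"
  define N where "N = N_of q"
  define p where "p = q^2"
  define \<zeta> where "\<zeta> = q^4"
  have zp: "\<zeta> = p^2" unfolding \<zeta>_def p_def by (simp add: power_mult[symmetric])
  have rp: "root_of_unity p" unfolding p_def by (rule root_pow[OF assms(1)])
  have rz: "root_of_unity \<zeta>" unfolding \<zeta>_def by (rule root_pow[OF assms(1)])
  have ncord: "n = cord p" unfolding n_def n_of_def p_def ..
  have Ncord: "N = cord \<zeta>" unfolding N_def N_of_def \<zeta>_def ..
  have n_pos: "n > 0" and pn: "p ^ n = 1" and pmin: "\<And>k. 0 < k \<Longrightarrow> k < n \<Longrightarrow> p ^ k \<noteq> 1"
    using cord_props[OF rp] unfolding ncord by auto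
  have N_pos: "N > 0" and zN: "\<zeta> ^ N = 1" and zmin: "\<forall>k. 0 < k \<and> k < N \<longrightarrow> \<zeta> ^ k \<noteq> 1"
    using cord_props[OF rz] unfolding Ncord by auto
  have "\<zeta> ^ n = (p ^ n) ^ 2" unfolding zp by (simp only: power_mult[symmetric] mult.commute)
  hence "\<zeta> ^ n = 1" using pn by simp
  hence Ndn: "N dvd n" unfolding Ncord by (rule cord_dvd[OF rz])
  have "p ^ (2 * N) = 1" using zN unfolding zp by (simp only: power_mult)
  hence ndN: "n dvd 2 * N" unfolding ncord by (rule cord_dvd[OF rp])
  obtain d where nd: "n = N * d" using Ndn by blast
  obtain c where nc: "2 * N = n * c" using ndN by blast
  have "N * 2 = N * (d * c)" using nd nc by (auto simp: mult.commute)
  hence dc: "d * c = 2" using N_pos by simp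
  hence "d dvd 2" by (metis dvd_triv_left)
  moreover have "d > 0" using dc by (cases d) auto
  ultimately have d12: "d = 1 \<or> d = 2" using dvd_imp_le[of d 2] by auto

  define t where "t = (SOME t::complex. t \<noteq> 0 \<and> t + inverse t = w)"
  have "t \<noteq> 0 \<and> t + inverse t = w" unfolding t_def by (rule someI_ex[OF cheb_root_ex])
  hence t0: "t \<noteq> 0" and wt: "w = t + inverse t" by auto
  have cheb: "cheb N w = t ^ N + inverse t ^ N" unfolding cheb_def t_def Let_def ..

  define u where "u = \<sigma>^2"
  define y1 where "y1 = -(q^2*\<sigma>^2)"
  define y2 where "y2 = -(q^2*t*\<sigma>^2)"
  define y3 where "y3 = q^4*\<sigma>^2"
  have rf: "r_coef q \<sigma> w i = ((t - \<zeta>^i * y1) * (1 - \<zeta>^i * y2)) / (t * ((1 - \<zeta>^i * u) * (1 - \<zeta>^i * y3)))" for i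
    unfolding wt y1_def y2_def y3_def u_def \<zeta>_def by (rule r_form[OF q0 assms(3) t0])
  have prodr: "(\<Prod>i\<in>{1..n}. r_coef q \<sigma> w i) =
     ((\<Prod>i\<in>{1..n}. t - \<zeta>^i * y1) * (\<Prod>i\<in>{1..n}. 1 - \<zeta>^i * y2)) /
     (t^n * ((\<Prod>i\<in>{1..n}. 1 - \<zeta>^i * u) * (\<Prod>i\<in>{1..n}. 1 - \<zeta>^i * y3)))"
    unfolding rf by (simp add: prod_dividef prod.distrib)
  have PR: "(\<Prod>i\<in>{1..n}. x - \<zeta>^i * y) = (x^N - y^N)^d" for x y
  proof -
    have "{1..n} = {1..<1+N*d}" using nd by auto
    thus ?thesis using prod_roots_k[OF zN zmin N_pos, where a=1 and k=d and x=x and y=y] by simp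
  qed
  have y3N: "y3^N = u^N" unfolding y3_def u_def \<zeta>_def[symmetric]
    by (simp add: power_mult_distrib zN)
  define \<tau> where "\<tau> = t^N"
  define S where "S = \<sigma>^n"
  have \<tau>0: "\<tau> \<noteq> 0" unfolding \<tau>_def using t0 by simp
  have S0: "S \<noteq> 0" unfolding S_def using assms(3) by simp
  have z0S: "z0 q \<sigma> = S + inverse S" unfolding z0_def S_def n_def by (simp add: power_inverse)
  have chebT: "cheb N w = \<tau> + inverse \<tau>" unfolding cheb \<tau>_def by (simp add: power_inverse)
  have P: "(\<Prod>i\<in>{1..n}. r_coef q \<sigma> w i) = R_fun q (z0 q \<sigma>) w"
  proof (cases "d = 1")
    case True
    hence Nn: "N = n" using nd by simp
    have nodd: "odd n"
    proof
      assume "even n"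
      then obtain m where m: "n = 2 * m" by blast
      have "\<zeta> ^ m = 1" using pn unfolding zp m by (simp only: power_mult[symmetric])
      moreover have "0 < m" "m < N" using m n_pos Nn by auto
      ultimately show False using zmin by blast
    qed
    have g: "(-p)^n = -1" using nodd pn by (simp add: power_minus')
    have hu: "u^n = S^2" unfolding u_def S_def by (simp only: power_mult[symmetric] mult.commute)
    have Y1: "y1^n = -(S^2)"
    proof -
      have "y1 = (-p) * u" unfolding y1_def p_def u_def by simp
      hence "y1^n = (-p)^n * u^n" by (metis power_mult_distrib)
      thus ?thesis using g hu by simp
    qed
    have Y2: "y2^n = - (\<tau> * S^2)"
    proof -
      have "y2 = (-p) * (t * u)" unfolding y2_def p_def u_def by simp
      hence "y2^n = (-p)^n * (t^n * u^n)" by (metis power_mult_distrib)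
      thus ?thesis using g hu unfolding \<tau>_def Nn by simp
    qed
    have Y3: "y3^n = S^2" using y3N hu unfolding Nn by simp
    have "(\<Prod>i\<in>{1..n}. r_coef q \<sigma> w i) =
       (\<tau> + S^2) * (1 + \<tau> * S^2) / (\<tau> * ((1 - S^2) * (1 - S^2)))"
      unfolding prodr PR True Nn Y1 Y2 Y3 hu \<tau>_def[unfolded Nn, symmetric] by simp
    also have "\<dots> = (\<tau> + inverse \<tau> + (S + inverse S)^2 - 2) / ((S + inverse S)^2 - 4)"
      by (rule odd_identity[OF \<tau>0 S0])
    also have "\<dots> = R_fun q (z0 q \<sigma>) w"
      unfolding R_fun_def n_def[symmetric] N_def[symmetric] z0S chebT using nodd by simp
    finally show ?thesis .
  next
    case False
    hence d2: "d = 2" using d12 by simp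
    hence n2: "n = 2 * N" using nd by simp
    have "(p^N)^2 = 1" using zN unfolding zp by (simp only: power_mult[symmetric] mult.commute)
    moreover have "p^N \<noteq> 1" using pmin[of N] N_pos n2 by simp
    ultimately have pN: "p^N = -1" by (simp add: power2_eq_1_iff)
    define e :: complex where "e = (-1)^N"
    have e12: "e = 1 \<or> e = -1" unfolding e_def by (cases "even N") simp_all
    have g: "(-p)^N = - e" unfolding e_def by (simp add: power_minus[of p] pN)
    have hu: "u^N = S" unfolding u_def S_def n2 by (simp only: power_mult[symmetric] mult.commute)
    have Y1: "y1^N = - e * S"
    proof -
      have "y1 = (-p) * u" unfolding y1_def p_def u_def by simp
      hence "y1^N = (-p)^N * u^N" by (metis power_mult_distrib)
      thus ?thesis using g hu by simp
    qed
    have Y2: "y2^N = - e * \<tau> * S"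
    proof -
      have "y2 = (-p) * (t * u)" unfolding y2_def p_def u_def by simp
      hence "y2^N = (-p)^N * (t^N * u^N)" by (metis power_mult_distrib)
      thus ?thesis using g hu unfolding \<tau>_def by simp
    qed
    have Y3: "y3^N = S" using y3N hu by simp
    have tn: "t^n = \<tau>^2" unfolding n2 \<tau>_def by (simp only: power_mult[symmetric] mult.commute)
    have epsq: "(eps_of q)^2 = e"
    proof -
      have "(eps_of q)^2 = p^(N*N)" unfolding eps_of_def p_def N_def[symmetric] power2_eq_square
        by (simp add: power_mult_distrib)
      also have "\<dots> = (p^N)^N" by (simp only: power_mult)
      finally show ?thesis unfolding pN e_def .
    qed
    have nev: "\<not> odd n" using n2 by simp
    have "(\<Prod>i\<in>{1..n}. r_coef q \<sigma> w i) =
       (\<tau> - (- e * S))^2 * (1 - (- e * \<tau> * S))^2 / (\<tau>^2 * ((1 - S)^2 * (1 - S)^2))"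
      unfolding prodr PR d2 Y1 Y2 Y3 hu tn \<tau>_def[symmetric] by simp
    also have "\<dots> = ((\<tau> + inverse \<tau> + e * (S + inverse S)) / (S + inverse S - 2))^2"
      by (rule even_identity[OF \<tau>0 S0 e12])
    also have "\<dots> = R_fun q (z0 q \<sigma>) w"
      unfolding R_fun_def n_def[symmetric] N_def[symmetric] z0S chebT epsq using nev by simp
    finally show ?thesis .
  qed
  show ?thesis
    unfolding E0_def n_def[symmetric] P[symmetric] by (rule image_char[OF n_pos])
qed

end
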